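(* Let $x\in(0,\infty)$. Then: (1) for $k\in\mathbb{Z}$, $a^{\rm st}_k(x)=g(s_k(x))$ and $b^{\rm st}_k(x)=h(s_k(x))$; (2) for $j<k$ in $\mathbb{Z}$, $m^{\rm st}_k(x)-m^{\rm st}_j(x)=\sum_{i=j+1}^k\frac{1}{Z(s_i(x))}$ and $n^{\rm st}_j(x)-n^{\rm st}_k(x)=\sum_{i=j+1}^k\frac{s_i(x)}{Z(s_i(x))}$; in particular $m^{\rm st}_k(x)-m^{\rm st}_{k-1}(x)=Z(s_k(x))^{-1}$ and $n^{\rm st}_{k-1}(x)-n^{\rm st}_k(x)=s_k(x)Z(s_k(x))^{-1}$; (3) for $j,k\in\mathbb{N}$, $\mathcal{M}_{j+1,k+1}(x)=\Big(\sum_{i=-j}^{k+1}\frac{1}{Z(s_i(x))}\Big)^{-1}\sum_{i=-j}^{k+1}\frac{s_i(x)}{Z(s_i(x))}$; (4) $\mathcal{M}(x)=\sum_{i\in\mathbb{Z}}\frac{s_i(x)}{Z(s_i(x))}$.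
   Context: For $x>0$, $\omega=\sqrt{8x+1}$, $c(x)=\frac{(\omega+3)^2}{16}$, $d(x)=\frac{(\omega+3)^2}{8(\omega+1)}$, $s(x)=\frac{(\omega-1)^2}{4(\omega+7)}$; $s_0=\mathrm{id}$, $s_{-1}(x)=1/s(1/x)$, $s_i=s\circ s_{i-1}$, $s_{-i}=s_{-1}\circ s_{-(i-1)}$ ($i\in\mathbb{N}_+$); $c_j=c\circ s_j$, $d_j=d\circ s_j$. Product convention: $\prod_{i=0}^kh_i=h_0\cdots h_k$ for $k\ge0$, $=1$ for $k=-1$, $=h_{k+1}^{-1}\cdots h_{-1}^{-1}$ for $k\le-2$. $Z(x)=\sum_{k\in\mathbb{Z}}\prod_{i=0}^k(c_i(x)-1)$; $f(x)=\frac{xc(x)d(x)}{(c(x)+xd(x))^2}$, $g(x)=Z(x)^{-1}c(x)f(x)$, $h(x)=Z(x)^{-1}xd(x)f(x)$. ABMN system on $\mathbb{Z}$: $a_i,b_i\ge0$, $m_i,n_i\in\mathbb{R}$ with $(a_i+b_i)(m_i+a_i)=a_im_{i+1}+b_im_{i-1}$, $(a_i+b_i)(n_i+b_i)=a_in_{i+1}+b_in_{i-1}$, $(a_i+b_i)^2=b_i(m_{i+1}-m_{i-1})$, $(a_i+b_i)^2=a_i(n_{i-1}-n_{i+1})$; positive if all $a_i,b_i>0$; standard if positive with $\lim_{-\infty}m=0$, $\lim_\infty n=0$, $\lim_\infty m=1$. $(a^{\rm st}(x),b^{\rm st}(x),m^{\rm st}(x),n^{\rm st}(x))$ is the unique standard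 solution with central ratio $\frac{n_{-1}-n_0}{m_0-m_{-1}}=x$; $\mathcal{M}(x)=\lim_{i\to-\infty}n^{\rm st}_i(x)$. For $p,r\in\mathbb{N}_+$, $\mathcal{M}_{p,r}(x)=\frac{n_{-p}-n_r}{m_r-m_{-p}}$ computed for any positive ABMN solution with central ratio $x$ (e.g. the standard one). *)

theory Defs
  imports "HOL-Analysis.Analysis"
begin

definition omega :: "real \<Rightarrow> real" where
  "omega x = sqrt (8 * x + 1)"

definition cfun :: "real \<Rightarrow> real" where
  "cfun x = (omega x + 3)^2 / 16"

definition dfun :: "real \<Rightarrow> real" where
  "dfun x = (omega x + 3)^2 / (8 * (omega x + 1))"

definition sfun :: "real \<Rightarrow> real" where
  "sfun x = (omega x - 1)^2 / (4 * (omega x + 7))"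

definition sneg1 :: "real \<Rightarrow> real" where
  "sneg1 x = 1 / sfun (1 / x)"

definition siter :: "int \<Rightarrow> real \<Rightarrow> real" where
  "siter k x = (if 0 \<le> k then (sfun ^^ nat k) x else (sneg1 ^^ nat (- k)) x)"

definition cj :: "int \<Rightarrow> real \<Rightarrow> real" where
  "cj j x = cfun (siter j x)"

definition dj :: "int \<Rightarrow> real \<Rightarrow> real" where
  "dj j x = dfun (siter j x)"

definition prodZ :: "(int \<Rightarrow> real) \<Rightarrow> int \<Rightarrow> real" where
  "prodZ h k = (if 0 \<le> k then (\<Prod>i\<in>{0..k}. h i) else (\<Prod>i\<in>{k+1..-1}. inverse (h i)))"

definition Zfun :: "real \<Rightarrow> real" where
  "Zfun x = (\<Sum>\<^sub>\<infinity>k\<in>(UNIV::int set). prodZ (\<lambda>i. cj i x - 1) k)"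

definition ffun :: "real \<Rightarrow> real" where
  "ffun x = x * cfun x * dfun x / (cfun x + x * dfun x)^2"

definition gfun :: "real \<Rightarrow> real" where
  "gfun x = inverse (Zfun x) * cfun x * ffun x"

definition hfun :: "real \<Rightarrow> real" where
  "hfun x = inverse (Zfun x) * x * dfun x * ffun x"

definition ABMN :: "(int \<Rightarrow> real) \<Rightarrow> (int \<Rightarrow> real) \<Rightarrow> (int \<Rightarrow> real) \<Rightarrow> (int \<Rightarrow> real) \<Rightarrow> bool" where
  "ABMN a b m n \<longleftrightarrow> (\<forall>i. a i \<ge> 0 \<and> b i \<ge> 0 \<and>
      (a i + b i) * (m i + a i) = a i * m (i+1) + b i * m (i-1) \<and>
      (a i + b i) * (n i + b i) = a i * n (i+1) + b i * n (i-1) \<and>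
      (a i + b i)^2 = b i * (m (i+1) - m (i-1)) \<and>
      (a i + b i)^2 = a i * (n (i-1) - n (i+1)))"

definition ABMN_positive :: "(int \<Rightarrow> real) \<Rightarrow> (int \<Rightarrow> real) \<Rightarrow> (int \<Rightarrow> real) \<Rightarrow> (int \<Rightarrow> real) \<Rightarrow> bool" where
  "ABMN_positive a b m n \<longleftrightarrow> ABMN a b m n \<and> (\<forall>i. a i > 0 \<and> b i > 0)"

definition ABMN_standard :: "(int \<Rightarrow> real) \<Rightarrow> (int \<Rightarrow> real) \<Rightarrow> (int \<Rightarrow> real) \<Rightarrow> (int \<Rightarrow> real) \<Rightarrow> bool" where
  "ABMN_standard a b m n \<longleftrightarrow> ABMN_positive a b m n \<and>
     (m \<longlongrightarrow> 0) at_bot \<and> (n \<longlongrightarrow> 0) at_top \<and> (m \<longlongrightarrow> 1) at_top"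

definition central_ratio :: "(int \<Rightarrow> real) \<Rightarrow> (int \<Rightarrow> real) \<Rightarrow> real" where
  "central_ratio m n = (n (-1) - n 0) / (m 0 - m (-1))"

definition st :: "real \<Rightarrow> (int \<Rightarrow> real) \<times> (int \<Rightarrow> real) \<times> (int \<Rightarrow> real) \<times> (int \<Rightarrow> real)" where
  "st x = (THE (a, b, m, n). ABMN_standard a b m n \<and> central_ratio m n = x)"

definition ast :: "real \<Rightarrow> int \<Rightarrow> real" where "ast x = fst (st x)"
definition bst :: "real \<Rightarrow> int \<Rightarrow> real" where "bst x = fst (snd (st x))"
definition mst :: "real \<Rightarrow> int \<Rightarrow> real" where "mst x = fst (snd (snd (st x)))"
definition nst :: "real \<Rightarrow> int \<Rightarrow> real" where "nst x = snd (snd (snd (st x)))"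

definition Mlim :: "real \<Rightarrow> real" where
  "Mlim x = Lim at_bot (nst x)"

definition Mpr :: "nat \<Rightarrow> nat \<Rightarrow> real \<Rightarrow> real" where
  "Mpr p r x = (nst x (- int p) - nst x (int r)) / (mst x (int r) - mst x (- int p))"

end

theory Submission
  imports Defs
begin

definition tau :: "real \<Rightarrow> real" where "tau y = (omega y - 1) / 4"

lemma omega_gt1: "y > 0 \<Longrightarrow> omega y > 1"
  unfolding omega_def by (simp add: real_less_rsqrt)

lemma omega_sq: "y > 0 \<Longrightarrow> (omega y)^2 = 8*y+1"
  unfolding omega_def by simp

lemma tau_pos: "y > 0 \<Longrightarrow> tau y > 0"
  using omega_gt1 unfolding tau_def by simp

lemma omega_tau: "omega y = 4 * tau y + 1"
  unfolding tau_def by (simp add: field_simps)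

lemma y_tau: assumes "y > 0" shows "y = tau y * (1 + 2 * tau y)"
proof -
  have "(4 * tau y + 1)^2 = 8*y+1" using omega_sq[OF assms] omega_tau by metis
  then show ?thesis by (simp add: power2_eq_square algebra_simps)
qed

lemma tau_of: assumes "t > 0" shows "tau (t * (1 + 2*t)) = t"
proof -
  have "8 * (t * (1 + 2*t)) + 1 = (4*t+1)^2" by (simp add: power2_eq_square algebra_simps)
  then have "omega (t * (1 + 2*t)) = 4*t+1" unfolding omega_def using assms by simp
  then show ?thesis unfolding tau_def by simp
qed

lemma cfun_tau: "cfun y = (tau y + 1)^2"
  unfolding cfun_def omega_tau by (simp add: power2_eq_square algebra_simps)

lemma dfun_tau: "y > 0 \<Longrightarrow> dfun y = (tau y + 1)^2 / (2 * tau y + 1)"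
  unfolding dfun_def omega_tau using tau_pos[of y]
  by (simp add: power2_eq_square field_simps)

lemma sfun_tau: "y > 0 \<Longrightarrow> sfun y = (tau y)^2 / (tau y + 2)"
  unfolding sfun_def omega_tau using tau_pos[of y]
  by (simp add: power2_eq_square field_simps)

lemma sfun_pos: assumes "y > 0" shows "sfun y > 0"
proof -
  have "tau y > 0" using tau_pos assms by simp
  then show ?thesis using sfun_tau[OF assms] by simp
qed

lemma sfun_inv: assumes "v > 0" shows "sfun (1 / sfun v) = 1 / v"
proof -
  define t where "t = tau v"
  have t: "t > 0" using tau_pos assms t_def by simp
  have sv: "sfun v = t^2/(t+2)" using sfun_tau assms t_def by simp
  have "1 / sfun v = (1/t) * (1 + 2 * (1/t))" unfolding sv using t by (simp add: field_simps power2_eq_square)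
  then have "tau (1 / sfun v) = 1/t" using tau_of[of "1/t"] t by simp
  moreover have "1 / sfun v > 0" using sfun_pos assms by simp
  ultimately have "sfun (1 / sfun v) = (1/t)^2 / (1/t + 2)" using sfun_tau by simp
  also have "\<dots> = 1 / (t * (1 + 2*t))" using t by (simp add: field_simps power2_eq_square)
  also have "\<dots> = 1 / v" using y_tau[OF assms] t_def by simp
  finally show ?thesis .
qed

lemma sneg1_pos: "y > 0 \<Longrightarrow> sneg1 y > 0"
  unfolding sneg1_def using sfun_pos[of "1/y"] by simp

lemma s_sneg1: "y > 0 \<Longrightarrow> sfun (sneg1 y) = y"
  unfolding sneg1_def using sfun_inv[of "1/y"] by simp

lemma sneg1_s: "y > 0 \<Longrightarrow> sneg1 (sfun y) = y"
  unfolding sneg1_def using sfun_inv[of y] by simp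

lemma s_le: assumes "y > 0" shows "sfun y \<le> y / 9"
proof -
  define t where "t = tau y"
  have t: "t > 0" using tau_pos assms t_def by simp
  have e: "t*(1+2*t)*(t+2) - 9*t^2 = 2*t*(t-1)^2" by (simp add: power2_eq_square algebra_simps)
  have "0 \<le> 2*t*(t-1)^2" using t by simp
  then have "t^2 \<le> (t*(1+2*t)/9)*(t+2)" using e by (simp add: algebra_simps)
  then have "t^2/(t+2) \<le> t*(1+2*t)/9" using t by (simp add: pos_divide_le_eq)
  then show ?thesis using sfun_tau[OF assms] y_tau[OF assms] t_def by simp
qed

lemma sneg1_ge: assumes "y > 0" shows "sneg1 y \<ge> 9 * y"
proof -
  have le: "sfun (1/y) \<le> (1/y)/9" using s_le[of "1/y"] assms by simp
  have p: "sfun (1/y) > 0" using sfun_pos[of "1/y"] assms by simp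
  have "9 * y * sfun (1/y) \<le> 9 * y * ((1/y)/9)" using le assms by (intro mult_left_mono) auto
  then have "9 * y * sfun (1/y) \<le> 1" using assms by simp
  then show ?thesis unfolding sneg1_def using p by (simp add: pos_le_divide_eq)
qed

lemma c1_lower: assumes "y > 0" shows "cfun y - 1 \<ge> y / 2"
  using y_tau[OF assms] cfun_tau[of y] tau_pos[OF assms]
  by (simp add: power2_eq_square algebra_simps) 

lemma c1_upper: assumes "y > 0" shows "cfun y - 1 \<le> y * (y + 2)"
proof -
  define t where "t = tau y"
  have t: "t > 0" using tau_pos assms t_def by simp
  have "0 \<le> t*(2*t)" using t by simp
  moreover have "y = t + t*(2*t)" using y_tau[OF assms] t_def by (simp add: algebra_simps)
  ultimately have "t \<le> y" by linarith
  then have "t*(t+2) \<le> y*(y+2)" using t by (intro mult_mono) auto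
  then show ?thesis using cfun_tau[of y] t_def by (simp add: power2_eq_square algebra_simps)
qed

lemma c1_pos: "y > 0 \<Longrightarrow> cfun y - 1 > 0"
  using c1_lower[of y] by simp

lemma siter_0[simp]: "siter 0 x = x" unfolding siter_def by simp

lemma siter_nat: "siter (int n) x = (sfun ^^ n) x" unfolding siter_def by simp
lemma siter_negnat: "n > 0 \<Longrightarrow> siter (- int n) x = (sneg1 ^^ n) x" unfolding siter_def by simp

lemma siter_pos: assumes "x > 0" shows "siter k x > 0"
proof (cases "k \<ge> 0")
  case True
  have "\<And>n. (sfun ^^ n) x > 0"
  proof -
    fix n show "(sfun ^^ n) x > 0" by (induction n) (auto simp: assms sfun_pos)
  qed
  then show ?thesis using True unfolding siter_def by simp
next
  case False
  have "\<And>n. (sneg1 ^^ n) x > 0"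
  proof -
    fix n show "(sneg1 ^^ n) x > 0" by (induction n) (auto simp: assms sneg1_pos)
  qed
  then show ?thesis using False unfolding siter_def by simp
qed

lemma siter_succ_nn: assumes "k \<ge> 0" shows "siter (k+1) x = sfun (siter k x)"
proof -
  have "nat (k+1) = Suc (nat k)" using assms by simp
  then show ?thesis using assms unfolding siter_def by simp
qed

lemma siter_pred_np: assumes "k \<le> 0" shows "siter (k-1) x = sneg1 (siter k x)"
proof (cases "k = 0")
  case True then show ?thesis unfolding siter_def by simp
next
  case False
  have "nat (-(k-1)) = Suc (nat (-k))" using assms by simp
  then show ?thesis using assms False unfolding siter_def by simp
qed

lemma siter_succ: assumes "x > 0" shows "siter (k+1) x = sfun (siter k x)"
proof (cases "k \<ge> 0")
  case True then show ?thesis by (rule siter_succ_nn)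
next
  case False
  then have "siter k x = sneg1 (siter (k+1) x)" using siter_pred_np[of "k+1" x] by simp
  then show ?thesis using s_sneg1 siter_pos[OF assms] by simp
qed

lemma siter_pred: assumes "x > 0" shows "siter (k-1) x = sneg1 (siter k x)"
proof (cases "k \<le> 0")
  case True then show ?thesis by (rule siter_pred_np)
next
  case False
  then have "siter k x = sfun (siter (k-1) x)" using siter_succ_nn[of "k-1" x] by simp
  then show ?thesis using sneg1_s siter_pos[OF assms] by simp
qed

lemma siter_shift: assumes "x > 0" shows "siter k (sfun x) = siter (k+1) x"
proof (induction k rule: int_induct[where k=0])
  case base
  then show ?case using siter_succ[OF assms, of 0] by simp
next
  case (step1 i)
  then show ?case using siter_succ[OF assms, of "i+1"] siter_succ[OF sfun_pos[OF assms], of i] by simp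
next
  case (step2 i)
  have "siter (i - 1) (sfun x) = sneg1 (siter i (sfun x))" using siter_pred[OF sfun_pos[OF assms]] by simp
  also have "\<dots> = sneg1 (siter (i+1) x)" using step2 by simp
  also have "\<dots> = siter i x" using siter_pred[OF assms, of "i+1"] by simp
  finally show ?case by simp
qed

lemma siter_up_bound: assumes "x > 0" shows "siter (int n) x \<le> x / 9^n"
proof (induction n)
  case 0 then show ?case by simp
next
  case (Suc n)
  have "siter (int (Suc n)) x = sfun (siter (int n) x)" using siter_succ[OF assms, of "int n"] by (simp add: ac_simps)
  also have "\<dots> \<le> siter (int n) x / 9" using s_le siter_pos[OF assms] by simp
  also have "\<dots> \<le> x / 9^(Suc n)" using Suc by simp
  finally show ?case .
qed

lemma siter_down_bound: assumes "x > 0" shows "siter (- int n) x \<ge> 9^n * x"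
proof (induction n)
  case 0 then show ?case by simp
next
  case (Suc n)
  have "siter (- int (Suc n)) x = sneg1 (siter (- int n) x)"
  proof -
    have "- int (Suc n) = - int n - 1" by simp
    then show ?thesis using siter_pred[OF assms, of "- int n"] by metis
  qed
  moreover have "sneg1 (siter (- int n) x) \<ge> 9 * siter (- int n) x" using sneg1_ge siter_pos[OF assms] by simp
  ultimately show ?case using Suc by simp
qed

lemma prodZ_rec: assumes "\<And>i. h i \<noteq> 0" shows "prodZ h k = prodZ h (k-1) * h k"
proof -
  consider "k \<ge> 1" | "k = 0" | "k = -1" | "k \<le> -2" by linarith
  then show ?thesis
  proof cases
    case 1
    have "{0..k} = insert k {0..k-1}" using 1 by auto
    then show ?thesis using 1 unfolding prodZ_def by (simp add: mult.commute)
  next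
    case 2 then show ?thesis unfolding prodZ_def by simp
  next
    case 3 then show ?thesis unfolding prodZ_def using assms[of "-1"] by simp
  next
    case 4
    have "{k..-1} = insert k {k+1..-1}" using 4 by auto
    then have "prodZ h (k-1) = inverse (h k) * prodZ h k" using 4 unfolding prodZ_def by simp
    then show ?thesis using assms[of k] by simp
  qed
qed

lemma prodZ_pos: assumes "\<And>i. h i > 0" shows "prodZ h k > 0"
  unfolding prodZ_def using assms by (auto intro!: prod_pos)

lemma prodZ_unique:
  assumes "\<And>i. h i \<noteq> 0" "\<And>k. R k = R (k-1) * h k" "R (-1) = 1"
  shows "R k = prodZ h k"
proof (induction k rule: int_induct[where k="-1"])
  case base then show ?case using assms(3) unfolding prodZ_def by simp
next
  case (step1 i)
  then show ?case using assms(2)[of "i+1"] prodZ_rec[OF assms(1), where k="i+1"] by simp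
next
  case (step2 i)
  have "R (i-1) = R i / h i" using assms(2)[of i] assms(1)[of i] by simp
  moreover have "prodZ h (i-1) = prodZ h i / h i" using prodZ_rec[OF assms(1), where k=i] assms(1)[of i] by simp
  ultimately show ?case using step2 by simp
qed

definition P :: "real \<Rightarrow> int \<Rightarrow> real" where "P x k = prodZ (\<lambda>i. cj i x - 1) k"

lemma h_pos: "x > 0 \<Longrightarrow> cj i x - 1 > 0"
  unfolding cj_def using c1_pos siter_pos by simp

lemma P_pos: "x > 0 \<Longrightarrow> P x k > 0"
  unfolding P_def using h_pos by (intro prodZ_pos) simp

lemma P_rec: "x > 0 \<Longrightarrow> P x k = P x (k-1) * (cj k x - 1)"
  unfolding P_def using h_pos by (intro prodZ_rec) (metis less_irrefl)

lemma P_m1[simp]: "P x (-1) = 1" unfolding P_def prodZ_def by simp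

lemma Zfun_P: "Zfun x = infsum (P x) UNIV"
  unfolding Zfun_def P_def by simp

lemma P_shift: assumes "x > 0" shows "P x k = (cfun x - 1) * P (sfun x) (k-1)"
proof -
  have sx: "sfun x > 0" using sfun_pos assms by simp
  have "(cfun x - 1) * P (sfun x) (k-1) = prodZ (\<lambda>i. cj i x - 1) k"
  proof (rule prodZ_unique)
    show "\<And>i. cj i x - 1 \<noteq> 0" using h_pos[OF assms] by (metis less_irrefl)
  next
    fix k
    have "cj (k-1) (sfun x) = cj k x" unfolding cj_def using siter_shift[OF assms, of "k-1"] by simp
    then show "(cfun x - 1) * P (sfun x) (k - 1) = (cfun x - 1) * P (sfun x) (k - 1 - 1) * (cj k x - 1)"
      using P_rec[OF sx, of "k-1"] by simp
  next
    have "cj (-1) (sfun x) = cfun x" unfolding cj_def using siter_shift[OF assms, of "-1"] by simp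
    moreover have "P (sfun x) (-2) = inverse (cj (-1) (sfun x) - 1)" unfolding P_def prodZ_def by simp
    ultimately show "(cfun x - 1) * P (sfun x) (- 1 - 1) = 1" using c1_pos[OF assms] by simp
  qed
  then show ?thesis unfolding P_def by simp
qed

lemma summable_int:
  fixes f :: "int \<Rightarrow> real"
  assumes "\<And>i. f i \<ge> 0" "summable (\<lambda>n. f (int n))" "summable (\<lambda>n. f (- int n - 1))"
  shows "f summable_on UNIV"
proof -
  have a: "(\<lambda>n. f (int n)) summable_on UNIV" using assms by (intro summable_nonneg_imp_summable_on) auto
  have b: "(\<lambda>n. f (- int n - 1)) summable_on UNIV" using assms by (intro summable_nonneg_imp_summable_on) auto
  have a': "f summable_on (int ` UNIV)" using a summable_on_reindex[of int UNIV f] by (simp add: o_def)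
  have inj: "inj (\<lambda>n::nat. - int n - 1)" by (auto simp: inj_def)
  have b': "f summable_on ((\<lambda>n::nat. - int n - 1) ` UNIV)"
    using b summable_on_reindex[OF inj, of f] by (simp add: o_def)
  have U: "UNIV = int ` UNIV \<union> (\<lambda>n::nat. - int n - 1) ` UNIV"
  proof (rule set_eqI, rule iffI)
    fix k :: int
    show "k \<in> int ` UNIV \<union> (\<lambda>n::nat. - int n - 1) ` UNIV"
    proof (cases "k \<ge> 0")
      case True then have "k = int (nat k)" by simp
      then show ?thesis by blast
    next
      case False then have "k = - int (nat (-k-1)) - 1" by simp
      then show ?thesis by blast
    qed
  qed auto
  have D: "int ` UNIV \<inter> (\<lambda>n::nat. - int n - 1) ` UNIV = {}" by auto
  show ?thesis using summable_on_Un_disjoint[OF a' b' D] U by simp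
qed

lemma P_summable: assumes "x > 0" shows "P x summable_on UNIV"
proof (rule summable_int)
  show "\<And>i. P x i \<ge> 0" using P_pos[OF assms] less_imp_le by blast
next
  have "(\<lambda>n. x * (1/9)^n) \<longlonglongrightarrow> x * 0"
    by (intro tendsto_mult tendsto_const LIMSEQ_power_zero) auto
  then have "eventually (\<lambda>n. x * (1/9)^n < 1/8) sequentially"
    by (intro order_tendstoD) auto
  then obtain N where N: "\<And>n. n \<ge> N \<Longrightarrow> x * (1/9)^n < 1/8" by (auto simp: eventually_sequentially)
  show "summable (\<lambda>n. P x (int n))"
  proof (rule summable_ratio_test[where c="1/2" and N=N])
    fix n assume n: "n \<ge> N"
    define y where "y = siter (int (Suc n)) x"
    have y0: "y > 0" unfolding y_def using siter_pos[OF assms] by simp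
    have "y \<le> x / 9^(Suc n)" unfolding y_def by (rule siter_up_bound[OF assms])
    also have "\<dots> \<le> x * (1/9)^n" using assms by (simp add: field_simps)
    finally have y1: "y \<le> 1/8" using N[OF n] by simp
    have "cfun y - 1 \<le> y * (y+2)" using c1_upper[OF y0] .
    also have "\<dots> \<le> (1/8) * (1/8 + 2)" using y0 y1 by (intro mult_mono) auto
    finally have cy: "cfun y - 1 \<le> 1/2" by simp
    have "P x (int (Suc n)) = P x (int n) * (cfun y - 1)"
      using P_rec[OF assms, of "int (Suc n)"] unfolding cj_def y_def by simp
    then show "norm (P x (int (Suc n))) \<le> 1/2 * norm (P x (int n))"
      using P_pos[OF assms, of "int n"] cy c1_pos[OF y0]
      by (simp add: abs_of_pos mult_left_mono mult.commute)
  qed simp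
next
  have "(\<lambda>n. (4/x) * (1/9)^n) \<longlonglongrightarrow> (4/x) * 0"
    by (intro tendsto_mult tendsto_const LIMSEQ_power_zero) auto
  then have "eventually (\<lambda>n. (4/x) * (1/9)^n < 1/2) sequentially"
    by (intro order_tendstoD) auto
  then obtain N where N: "\<And>n. n \<ge> N \<Longrightarrow> (4/x) * (1/9)^n < 1/2" by (auto simp: eventually_sequentially)
  show "summable (\<lambda>n. P x (- int n - 1))"
  proof (rule summable_ratio_test[where c="1/2" and N=N])
    fix n assume n: "n \<ge> N"
    define y where "y = siter (- int (Suc n)) x"
    have y0: "y > 0" unfolding y_def using siter_pos[OF assms] by simp
    have "9^(Suc n) * x \<le> y" unfolding y_def by (rule siter_down_bound[OF assms])
    have "cfun y - 1 \<ge> y/2" using c1_lower[OF y0] .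
    then have "inverse (cfun y - 1) \<le> 2 / y" using y0
      by (metis c1_pos divide_pos_pos half_gt_zero inverse_eq_divide le_imp_inverse_le zero_less_numeral inverse_divide)
    also have "2 / y \<le> 2 / (9^(Suc n) * x)" using y0 assms \<open>9^(Suc n) * x \<le> y\<close>
      by (intro divide_left_mono) auto
    also have "\<dots> \<le> (4/x) * (1/9)^n" using assms by (simp add: field_simps)
    finally have cy: "inverse (cfun y - 1) \<le> 1/2" using N[OF n] by simp
    have yy: "y = siter (- int n - 1) x" unfolding y_def
      by (metis minus_diff_eq of_nat_Suc uminus_add_conv_diff add.commute diff_minus_eq_add)
    have e: "P x (- int n - 1) = P x (- int n - 1 - 1) * (cfun y - 1)"
      using P_rec[OF assms, of "- int n - 1"] unfolding cj_def yy by simp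
    have "P x (- int (Suc n) - 1) = P x (- int n - 1) * inverse (cfun y - 1)"
    proof -
      have "- int (Suc n) - 1 = - int n - 1 - 1" by simp
      then show ?thesis using e c1_pos[OF y0] by simp
    qed
    then show "norm (P x (- int (Suc n) - 1)) \<le> 1/2 * norm (P x (- int n - 1))"
      using P_pos[OF assms, of "- int n - 1"] cy c1_pos[OF y0]
      by (simp add: abs_of_pos mult_left_mono mult.commute)
  qed simp
qed

lemma Z_ge1: assumes "x > 0" shows "Zfun x \<ge> 1"
proof -
  have "sum (P x) {-1} \<le> infsum (P x) UNIV"
    using P_summable[OF assms] P_pos[OF assms] by (intro finite_sum_le_infsum) (auto intro: less_imp_le)
  then show ?thesis unfolding Zfun_P by simp
qed

lemma Z_pos: "x > 0 \<Longrightarrow> Zfun x > 0" using Z_ge1[of x] by simp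

lemma bij_m1: "bij_betw (\<lambda>k::int. k - 1) UNIV UNIV"
  by (rule bij_betwI[where g="\<lambda>k. k+1"]) auto

lemma Z_shift: assumes "x > 0" shows "Zfun x = (cfun x - 1) * Zfun (sfun x)"
proof -
  have sx: "sfun x > 0" using sfun_pos assms by simp
  have "Zfun x = infsum (\<lambda>k. (cfun x - 1) * P (sfun x) (k-1)) UNIV"
    unfolding Zfun_P by (rule infsum_cong) (rule P_shift[OF assms])
  also have "\<dots> = (cfun x - 1) * infsum (\<lambda>k. P (sfun x) (k-1)) UNIV"
    using P_summable[OF sx] summable_on_reindex_bij_betw[OF bij_m1, of "P (sfun x)"]
    by (intro infsum_cmult_right) simp
  also have "infsum (\<lambda>k. P (sfun x) (k-1)) UNIV = Zfun (sfun x)"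
    unfolding Zfun_P by (rule infsum_reindex_bij_betw[OF bij_m1])
  finally show ?thesis .
qed

lemma Q_const: assumes "x > 0" shows "P x (i-1) * Zfun (siter i x) = Zfun x"
proof (induction i rule: int_induct[where k=0])
  case base then show ?case by simp
next
  case (step1 i)
  have si: "siter i x > 0" using siter_pos[OF assms] by simp
  have "P x (i + 1 - 1) * Zfun (siter (i + 1) x) = P x (i-1) * ((cj i x - 1) * Zfun (sfun (siter i x)))"
    using P_rec[OF assms, of i] siter_succ[OF assms, of i] by simp
  also have "\<dots> = P x (i-1) * Zfun (siter i x)" using Z_shift[OF si] unfolding cj_def by simp
  finally show ?case using step1 by simp
next
  case (step2 i)
  have si: "siter (i-1) x > 0" using siter_pos[OF assms] by simp
  have "P x (i - 1 - 1) * Zfun (siter (i - 1) x) = P x (i-1-1) * ((cj (i-1) x - 1) * Zfun (sfun (siter (i-1) x)))"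
    using Z_shift[OF si] unfolding cj_def by simp
  also have "\<dots> = P x (i-1) * Zfun (siter i x)"
    using P_rec[OF assms, of "i-1"] siter_succ[OF assms, of "i-1"] by simp
  finally show ?case using step2 by simp
qed

lemma invZ: assumes "x > 0" shows "1 / Zfun (siter i x) = P x (i-1) / Zfun x"
  using Q_const[OF assms, of i] Z_pos[OF assms] Z_pos[OF siter_pos[OF assms, of i]]
  by (simp add: field_simps)

lemma summ_invZ: assumes "x > 0" shows "(\<lambda>i. 1 / Zfun (siter i x)) summable_on UNIV"
proof -
  have "(\<lambda>i. P x (i-1)) summable_on UNIV"
    using P_summable[OF assms] summable_on_reindex_bij_betw[OF bij_m1, of "P x"] by simp
  then have "(\<lambda>i. inverse (Zfun x) * P x (i-1)) summable_on UNIV" by (rule summable_on_cmult_right)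
  then show ?thesis using invZ[OF assms] by (simp add: field_simps)
qed

lemma sum_invZ: assumes "x > 0" shows "infsum (\<lambda>i. 1 / Zfun (siter i x)) UNIV = 1"
proof -
  have "infsum (\<lambda>i. 1 / Zfun (siter i x)) UNIV = infsum (\<lambda>i. inverse (Zfun x) * P x (i-1)) UNIV"
    using invZ[OF assms] by (simp add: field_simps)
  also have "\<dots> = inverse (Zfun x) * infsum (\<lambda>i. P x (i-1)) UNIV"
    using P_summable[OF assms] summable_on_reindex_bij_betw[OF bij_m1, of "P x"]
    by (intro infsum_cmult_right) simp
  also have "infsum (\<lambda>i. P x (i-1)) UNIV = Zfun x"
    unfolding Zfun_P by (rule infsum_reindex_bij_betw[OF bij_m1])
  finally show ?thesis using Z_pos[OF assms] by simp
qed

lemma summ_sZ: assumes "x > 0" shows "(\<lambda>i. siter i x / Zfun (siter i x)) summable_on UNIV"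
proof (rule summable_on_comparison_test)
  show "(\<lambda>i. (2 / Zfun x) * P x i) summable_on UNIV"
    using P_summable[OF assms] by (rule summable_on_cmult_right)
next
  fix i :: int
  have si: "siter i x > 0" using siter_pos[OF assms] by simp
  show "0 \<le> siter i x / Zfun (siter i x)" using si Z_pos[OF si] by simp
  have "siter i x / Zfun (siter i x) = siter i x * P x (i-1) / Zfun x"
    using invZ[OF assms, of i] by (metis times_divide_eq_right mult.right_neutral)
  also have "siter i x * P x (i-1) \<le> 2 * P x i"
  proof -
    have "siter i x \<le> 2 * (cj i x - 1)" using c1_lower[OF si] unfolding cj_def by simp
    then have "siter i x * P x (i-1) \<le> 2 * (cj i x - 1) * P x (i-1)"
      using P_pos[OF assms, of "i-1"] by (intro mult_right_mono) auto
    then show ?thesis using P_rec[OF assms, of i] by (simp add: algebra_simps)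
  qed
  then have "siter i x * P x (i-1) / Zfun x \<le> 2 * P x i / Zfun x"
    using Z_pos[OF assms] by (intro divide_right_mono) auto
  finally show "siter i x / Zfun (siter i x) \<le> 2 / Zfun x * P x i" by simp
qed

lemma split_le_gt: fixes f :: "int \<Rightarrow> real" assumes "f summable_on UNIV"
  shows "infsum f UNIV = infsum f {..k} + infsum f {k<..}"
proof -
  have "UNIV = {..k} \<union> {k<..}" by auto
  then show ?thesis using infsum_Un_disjoint[of f "{..k}" "{k<..}"]
    summable_on_subset_banach[OF assms] by (metis Int_emptyI not_le order_less_imp_le subset_UNIV order.trans greaterThan_iff atMost_iff)
qed

lemma step_le: fixes f :: "int \<Rightarrow> real" assumes "f summable_on UNIV"
  shows "infsum f {..k} = infsum f {..k-1} + f k"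
proof -
  have "{..k} = {..k-1} \<union> {k}" by auto
  then show ?thesis using infsum_Un_disjoint[of f "{..k-1}" "{k}"]
    summable_on_subset_banach[OF assms] by simp
qed

lemma step_gt: fixes f :: "int \<Rightarrow> real" assumes "f summable_on UNIV"
  shows "infsum f {k-1<..} = f k + infsum f {k<..}"
proof -
  have "{k-1<..} = {k} \<union> {k<..}" by auto
  then show ?thesis using infsum_Un_disjoint[of f "{k}" "{k<..}"]
    summable_on_subset_banach[OF assms] by simp
qed

lemma tail_bot: fixes f :: "int \<Rightarrow> real"
  assumes sm: "f summable_on UNIV" and nn: "\<And>i. f i \<ge> 0"
  shows "((\<lambda>k. infsum f {..k}) \<longlongrightarrow> 0) at_bot"
proof (rule order_tendstoI)
  fix a :: real assume "a < 0"
  then show "eventually (\<lambda>k. a < infsum f {..k}) at_bot"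
  proof -
    have "\<And>k. 0 \<le> infsum f {..k}" using nn by (intro infsum_nonneg) auto
    then show ?thesis using \<open>a < 0\<close> by (intro always_eventually allI) (meson order_less_le_trans)
  qed
next
  fix e :: real assume e: "0 < e"
  define S where "S = infsum f UNIV"
  have "(sum f \<longlongrightarrow> S) (finite_subsets_at_top UNIV)"
    using sm unfolding S_def summable_iff_has_sum_infsum has_sum_def .
  then have "eventually (\<lambda>F. S - e < sum f F) (finite_subsets_at_top UNIV)"
    using e by (intro order_tendstoD) auto
  then obtain X where X: "finite X" "S - e < sum f X"
    unfolding eventually_finite_subsets_at_top by blast
  obtain b where b: "\<And>x. x \<in> X \<Longrightarrow> b \<le> x"
    using X(1) by (intro that[of "Min (insert 0 X)"]) (simp add: Min_le)
  show "eventually (\<lambda>k. infsum f {..k} < e) at_bot"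
    unfolding eventually_at_bot_linorder
  proof (intro exI allI impI)
    fix k assume k: "k \<le> b - 1"
    have "X \<subseteq> {k<..}" using b k by force
    then have "sum f X \<le> infsum f {k<..}"
      using summable_on_subset_banach[OF sm] X(1) nn by (intro finite_sum_le_infsum) auto
    then show "infsum f {..k} < e" using split_le_gt[OF sm, of k] X(2) unfolding S_def by simp
  qed
qed

lemma tail_top: fixes f :: "int \<Rightarrow> real"
  assumes sm: "f summable_on UNIV" and nn: "\<And>i. f i \<ge> 0"
  shows "((\<lambda>k. infsum f {k<..}) \<longlongrightarrow> 0) at_top"
proof (rule order_tendstoI)
  fix a :: real assume "a < 0"
  then show "eventually (\<lambda>k. a < infsum f {k<..}) at_top"
  proof -
    have "\<And>k. 0 \<le> infsum f {k<..}" using nn by (intro infsum_nonneg) auto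
    then show ?thesis using \<open>a < 0\<close> by (intro always_eventually allI) (meson order_less_le_trans)
  qed
next
  fix e :: real assume e: "0 < e"
  define S where "S = infsum f UNIV"
  have "(sum f \<longlongrightarrow> S) (finite_subsets_at_top UNIV)"
    using sm unfolding S_def summable_iff_has_sum_infsum has_sum_def .
  then have "eventually (\<lambda>F. S - e < sum f F) (finite_subsets_at_top UNIV)"
    using e by (intro order_tendstoD) auto
  then obtain X where X: "finite X" "S - e < sum f X"
    unfolding eventually_finite_subsets_at_top by blast
  obtain b where b: "\<And>x. x \<in> X \<Longrightarrow> x \<le> b"
    using X(1) by (intro that[of "Max (insert 0 X)"]) (simp add: Max_ge)
  show "eventually (\<lambda>k. infsum f {k<..} < e) at_top"
    unfolding eventually_at_top_linorder
  proof (intro exI allI impI)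
    fix k assume k: "k \<ge> b"
    have "X \<subseteq> {..k}" using b k by force
    then have "sum f X \<le> infsum f {..k}"
      using summable_on_subset_banach[OF sm] X(1) nn by (intro finite_sum_le_infsum) auto
    then show "infsum f {k<..} < e" using split_le_gt[OF sm, of k] X(2) unfolding S_def by simp
  qed
qed

lemma ffun_tau: assumes "y > 0" shows "ffun y = tau y / (tau y + 1)^2"
proof -
  define t where "t = tau y"
  have t: "t > 0" using tau_pos assms t_def by simp
  have y: "y = t * (1 + 2*t)" using y_tau[OF assms] t_def by simp
  have c: "cfun y = (t+1)^2" using cfun_tau t_def by simp
  have d: "dfun y = (t+1)^2/(2*t+1)" using dfun_tau[OF assms] t_def by simp
  have yd: "y * dfun y = t * (t+1)^2" unfolding d by (subst y) (use t in \<open>simp add: field_simps power2_eq_square\<close>)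
  have cyd: "cfun y + y * dfun y = (t+1)^3" unfolding c yd by (simp add: power2_eq_square power3_eq_cube algebra_simps)
  have "ffun y = cfun y * (y * dfun y) / (cfun y + y * dfun y)^2" unfolding ffun_def by (simp add: ac_simps)
  also have "\<dots> = (t+1)^2 * (t * (t+1)^2) / ((t+1)^3)^2" using cyd yd c by simp
  also have "\<dots> = t / (t+1)^2"
  proof -
    have "\<And>u::real. u > 0 \<Longrightarrow> u^2 * (t * u^2) / (u^3)^2 = t/u^2"
      by (simp add: divide_simps power2_eq_square power3_eq_cube)
    then show ?thesis using t by simp
  qed
  finally show ?thesis using t_def by simp
qed

lemma gfun_tau: assumes "y > 0" shows "gfun y = tau y / Zfun y"
proof -
  have t1: "(tau y + 1)^2 > 0" using tau_pos[OF assms] by simp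
  have "gfun y = inverse (Zfun y) * ((tau y + 1)^2 * (tau y / (tau y + 1)^2))"
    unfolding gfun_def ffun_tau[OF assms] cfun_tau by (simp add: ac_simps)
  also have "(tau y + 1)^2 * (tau y / (tau y + 1)^2) = tau y" using t1 by simp
  finally show ?thesis by (simp add: divide_inverse ac_simps)
qed

lemma hfun_tau: assumes "y > 0" shows "hfun y = (tau y)^2 / Zfun y"
proof -
  define t where "t = tau y"
  have t: "t > 0" using tau_pos assms t_def by simp
  have y: "y = t * (1 + 2*t)" using y_tau[OF assms] t_def by simp
  have d: "dfun y = (t+1)^2/(2*t+1)" using dfun_tau[OF assms] t_def by simp
  have yd: "y * dfun y = t * (t+1)^2" unfolding d by (subst y) (use t in \<open>simp add: field_simps power2_eq_square\<close>)
  have "hfun y = inverse (Zfun y) * (y * dfun y) * ffun y" unfolding hfun_def by (simp add: ac_simps)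
  also have "\<dots> = inverse (Zfun y) * (t * (t+1)^2) * (t / (t+1)^2)" unfolding yd ffun_tau[OF assms] t_def ..
  also have "(t * (t+1)^2) * (t / (t+1)^2) = t^2" using t by (simp add: power2_eq_square)
  then have "inverse (Zfun y) * (t * (t+1)^2) * (t / (t+1)^2) = t^2 / Zfun y"
    by (simp add: divide_inverse ac_simps)
  finally show ?thesis using t_def by simp
qed

lemma abmn_local:
  fixes a b mc ml mr nc nl nr :: real
  assumes a: "a > 0" and b: "b > 0"
  shows "((a+b)*(mc+a) = a*mr + b*ml \<and> (a+b)*(nc+b) = a*nr + b*nl \<and>
          (a+b)^2 = b*(mr-ml) \<and> (a+b)^2 = a*(nl - nr)) \<longleftrightarrow>
         (mc - ml = a^2/b \<and> mr - mc = b + 2*a \<and> nl - nc = a + 2*b \<and> nc - nr = b^2/a)"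
proof
  assume H: "(a+b)*(mc+a) = a*mr + b*ml \<and> (a+b)*(nc+b) = a*nr + b*nl \<and>
          (a+b)^2 = b*(mr-ml) \<and> (a+b)^2 = a*(nl - nr)"
  define p where "p = mc - ml"
  define p' where "p' = mr - mc"
  define q where "q = nl - nc"
  define q' where "q' = nc - nr"
  have e1: "a * p' - b * p = a * (a+b)" using H unfolding p_def p'_def by (simp add: algebra_simps)
  have e3: "b * (p + p') = (a+b)^2" using H unfolding p_def p'_def by (simp add: algebra_simps)
  have e2: "b * q - a * q' = b * (a+b)" using H unfolding q_def q'_def by (simp add: algebra_simps)
  have e4: "a * (q + q') = (a+b)^2" using H unfolding q_def q'_def by (simp add: algebra_simps)
  have "a * b * p' - b * b * p = a * b * (a+b)" using e1 by (metis mult.assoc right_diff_distrib mult.left_commute)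
  moreover have "a * b * p + a * b * p' = a * (a+b)^2" using e3 by (metis distrib_left mult.assoc)
  ultimately have "(a+b) * (b * p) = (a+b) * a^2"
    by (simp add: power2_eq_square algebra_simps)
  then have hp: "b * p = a^2" using a b by simp
  then have P1: "p = a^2/b" using b by (simp add: field_simps)
  have "b * p' = b * (b + 2*a)" using e3 hp b by (simp add: power2_eq_square algebra_simps)
  then have P2: "p' = b + 2*a" using b by simp
  have "a * b * q - a * a * q' = a * b * (a+b)" using e2 by (metis mult.assoc right_diff_distrib mult.left_commute)
  moreover have "a * a * q + a * a * q' = a * (a+b)^2" using e4 by (metis distrib_left mult.assoc)
  ultimately have "(a+b) * (a * q) = (a+b) * (a*(a + 2*b))"
    by (simp add: power2_eq_square algebra_simps)
  then have hq: "a * q = a * (a + 2*b)" using a b by simp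
  then have Q1: "q = a + 2*b" using a by simp
  have "a * q' = b^2" using e4 hq a by (simp add: power2_eq_square algebra_simps)
  then have Q2: "q' = b^2/a" using a by (simp add: field_simps)
  show "mc - ml = a^2/b \<and> mr - mc = b + 2*a \<and> nl - nc = a + 2*b \<and> nc - nr = b^2/a"
    using P1 P2 Q1 Q2 unfolding p_def p'_def q_def q'_def by simp
next
  assume H: "mc - ml = a^2/b \<and> mr - mc = b + 2*a \<and> nl - nc = a + 2*b \<and> nc - nr = b^2/a"
  then have h1: "ml = mc - a^2/b" and h2: "mr = mc + b + 2*a" and h3: "nl = nc + a + 2*b" and h4: "nr = nc - b^2/a"
    by simp_all
  show "(a+b)*(mc+a) = a*mr + b*ml \<and> (a+b)*(nc+b) = a*nr + b*nl \<and>
          (a+b)^2 = b*(mr-ml) \<and> (a+b)^2 = a*(nl - nr)"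
  proof -
    have x1: "b * (a^2/b) = a^2" using b by simp
    have x2: "a * (b^2/a) = b^2" using a by simp
    show ?thesis unfolding h1 h2 h3 h4 using x1 x2 by (simp add: algebra_simps power2_eq_square)
  qed
qed

definition fZ :: "real \<Rightarrow> int \<Rightarrow> real" where "fZ x i = 1 / Zfun (siter i x)"
definition gZ :: "real \<Rightarrow> int \<Rightarrow> real" where "gZ x i = siter i x / Zfun (siter i x)"
definition Mc :: "real \<Rightarrow> int \<Rightarrow> real" where "Mc x k = infsum (fZ x) {..k}"
definition Nc :: "real \<Rightarrow> int \<Rightarrow> real" where "Nc x k = infsum (gZ x) {k<..}"
definition Ac :: "real \<Rightarrow> int \<Rightarrow> real" where "Ac x k = gfun (siter k x)"
definition Bc :: "real \<Rightarrow> int \<Rightarrow> real" where "Bc x k = hfun (siter k x)"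

lemma fZ_summ: "x > 0 \<Longrightarrow> fZ x summable_on UNIV"
  unfolding fZ_def[abs_def] using summ_invZ by simp
lemma gZ_summ: "x > 0 \<Longrightarrow> gZ x summable_on UNIV"
  unfolding gZ_def[abs_def] using summ_sZ by simp
lemma fZ_pos: "x > 0 \<Longrightarrow> fZ x i > 0"
  unfolding fZ_def using Z_pos siter_pos by simp
lemma gZ_pos: "x > 0 \<Longrightarrow> gZ x i > 0"
  unfolding gZ_def using Z_pos siter_pos by simp

lemma Mc_step: assumes "x > 0" shows "Mc x k - Mc x (k-1) = fZ x k"
  unfolding Mc_def using step_le[OF fZ_summ[OF assms], of k] by linarith
lemma Nc_step: assumes "x > 0" shows "Nc x (k-1) - Nc x k = gZ x k"
  unfolding Nc_def using step_gt[OF gZ_summ[OF assms], of k] by linarith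

lemma Mc_bot: "x > 0 \<Longrightarrow> (Mc x \<longlongrightarrow> 0) at_bot"
  unfolding Mc_def[abs_def] using fZ_summ fZ_pos by (intro tail_bot) (auto intro: less_imp_le)
lemma Nc_top: "x > 0 \<Longrightarrow> (Nc x \<longlongrightarrow> 0) at_top"
  unfolding Nc_def[abs_def] using gZ_summ gZ_pos by (intro tail_top) (auto intro: less_imp_le)
lemma Mc_top: assumes "x > 0" shows "(Mc x \<longlongrightarrow> 1) at_top"
proof -
  have "Mc x k = 1 - infsum (fZ x) {k<..}" for k
    using split_le_gt[OF fZ_summ[OF assms], of k] sum_invZ[OF assms] unfolding Mc_def fZ_def[abs_def] by simp
  moreover have "((\<lambda>k. 1 - infsum (fZ x) {k<..}) \<longlongrightarrow> 1 - 0) at_top"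
    using fZ_summ[OF assms] fZ_pos[OF assms] by (intro tendsto_diff tendsto_const tail_top) (auto intro: less_imp_le)
  moreover have "Mc x = (\<lambda>k. 1 - infsum (fZ x) {k<..})" using calculation(1) by (rule ext)
  ultimately show ?thesis by simp
qed

lemma alg_l1: "(t::real)>0 \<Longrightarrow> (Z::real)>0 \<Longrightarrow> (t^2/(t+2)) / (Z/(t*(t+2))) = t^3/Z"
  by (simp add: divide_simps) (simp add: algebra_simps power2_eq_square power3_eq_cube)

lemma cand_local: assumes "x > 0"
  shows "Mc x i - Mc x (i-1) = (Ac x i)^2 / Bc x i \<and> Mc x (i+1) - Mc x i = Bc x i + 2 * Ac x i \<and>
         Nc x (i-1) - Nc x i = Ac x i + 2 * Bc x i \<and> Nc x i - Nc x (i+1) = (Bc x i)^2 / Ac x i"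
proof -
  define y where "y = siter i x"
  have y: "y > 0" using siter_pos[OF assms] y_def by simp
  define t where "t = tau y"
  have t: "t > 0" using tau_pos y t_def by simp
  define Z where "Z = Zfun y"
  have Z: "Z > 0" using Z_pos y Z_def by simp
  have A: "Ac x i = t / Z" unfolding Ac_def y_def[symmetric] t_def Z_def using gfun_tau[OF y] .
  have B: "Bc x i = t^2 / Z" unfolding Bc_def y_def[symmetric] t_def Z_def using hfun_tau[OF y] .
  have sy: "siter (i+1) x = sfun y" using siter_succ[OF assms] y_def by simp
  have Zs: "Zfun (sfun y) = Z / (t * (t+2))"
  proof -
    have "Z = (cfun y - 1) * Zfun (sfun y)" using Z_shift[OF y] Z_def by simp
    moreover have "cfun y - 1 = t * (t+2)" using cfun_tau[of y] t_def by (simp add: power2_eq_square algebra_simps)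
    moreover have "t * (t+2) > 0" using t by simp
    ultimately show ?thesis by (simp add: field_simps)
  qed
  have yt: "y = t * (1 + 2*t)" using y_tau[OF y] t_def by simp
  have st: "sfun y = t^2/(t+2)" using sfun_tau[OF y] t_def by simp
  have 1: "Mc x i - Mc x (i-1) = 1 / Z" using Mc_step[OF assms, where k=i] unfolding fZ_def by (simp add: y_def Z_def)
  have 2: "Mc x (i+1) - Mc x i = t * (t+2) / Z"
    using Mc_step[OF assms, where k="i+1"] unfolding fZ_def sy Zs using t Z by simp
  have 3: "Nc x (i-1) - Nc x i = t * (1 + 2*t) / Z"
  proof -
    have "Nc x (i-1) - Nc x i = y / Z" using Nc_step[OF assms, where k=i] unfolding gZ_def by (simp add: y_def Z_def)
    then show ?thesis using yt by simp
  qed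
  have 4: "Nc x i - Nc x (i+1) = t^3 / Z"
  proof -
    have "Nc x i - Nc x (i+1) = sfun y / Zfun (sfun y)"
      using Nc_step[OF assms, where k="i+1"] unfolding gZ_def sy by simp
    also have "\<dots> = t^3 / Z" unfolding Zs unfolding st using t Z by (rule alg_l1)
    finally show ?thesis .
  qed
  have e1: "(t/Z)^2/(t^2/Z) = 1/Z" using t Z by (simp add: divide_simps power2_eq_square)
  have e2: "t^2/Z + 2*(t/Z) = t*(t+2)/Z" using t Z by (simp add: divide_simps power2_eq_square algebra_simps)
  have e3: "t/Z + 2*(t^2/Z) = t*(1+2*t)/Z" using t Z by (simp add: divide_simps power2_eq_square algebra_simps)
  have e4: "(t^2/Z)^2/(t/Z) = t^3/Z" using t Z by (simp add: divide_simps power2_eq_square power3_eq_cube)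
  show ?thesis unfolding A B 1 2 3 4 e1 e2 e3 e4 by simp
qed

lemma Ac_pos: "x > 0 \<Longrightarrow> Ac x i > 0"
  unfolding Ac_def using gfun_tau siter_pos tau_pos Z_pos by simp
lemma Bc_pos: assumes "x > 0" shows "Bc x i > 0"
proof -
  have y: "siter i x > 0" using siter_pos assms by simp
  then have "tau (siter i x) > 0" by (rule tau_pos)
  then show ?thesis unfolding Bc_def using hfun_tau[OF y] Z_pos[OF y] by simp
qed

lemma cand_standard: assumes "x > 0"
  shows "ABMN_standard (Ac x) (Bc x) (Mc x) (Nc x) \<and> central_ratio (Mc x) (Nc x) = x"
proof -
  have "ABMN (Ac x) (Bc x) (Mc x) (Nc x)"
    unfolding ABMN_def
  proof (intro allI)
    fix i :: int
    have L: "((Ac x i + Bc x i)*(Mc x i + Ac x i) = Ac x i * Mc x (i+1) + Bc x i * Mc x (i-1) \<and>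
        (Ac x i + Bc x i)*(Nc x i + Bc x i) = Ac x i * Nc x (i+1) + Bc x i * Nc x (i-1) \<and>
        (Ac x i + Bc x i)^2 = Bc x i * (Mc x (i+1) - Mc x (i-1)) \<and>
        (Ac x i + Bc x i)^2 = Ac x i * (Nc x (i-1) - Nc x (i+1)))"
      using abmn_local[OF Ac_pos[OF assms] Bc_pos[OF assms], where mc="Mc x i" and mr="Mc x (i+1)" and ml="Mc x (i-1)"
          and nc="Nc x i" and nr="Nc x (i+1)" and nl="Nc x (i-1)"] cand_local[OF assms, of i] by simp
    then show "0 \<le> Ac x i \<and> 0 \<le> Bc x i \<and>
        (Ac x i + Bc x i)*(Mc x i + Ac x i) = Ac x i * Mc x (i+1) + Bc x i * Mc x (i-1) \<and>
        (Ac x i + Bc x i)*(Nc x i + Bc x i) = Ac x i * Nc x (i+1) + Bc x i * Nc x (i-1) \<and>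
        (Ac x i + Bc x i)^2 = Bc x i * (Mc x (i+1) - Mc x (i-1)) \<and>
        (Ac x i + Bc x i)^2 = Ac x i * (Nc x (i-1) - Nc x (i+1))"
      using Ac_pos[OF assms, of i] Bc_pos[OF assms, of i] by simp
  qed
  then have "ABMN_standard (Ac x) (Bc x) (Mc x) (Nc x)"
    unfolding ABMN_standard_def ABMN_positive_def
    using Ac_pos[OF assms] Bc_pos[OF assms] Mc_bot[OF assms] Nc_top[OF assms] Mc_top[OF assms] by simp
  moreover have "central_ratio (Mc x) (Nc x) = x"
    unfolding central_ratio_def using Mc_step[OF assms, where k=0] Nc_step[OF assms, where k=0]
    unfolding fZ_def gZ_def using Z_pos[OF assms] by simp
  ultimately show ?thesis by simp
qed

lemma ratio_step:
  fixes a b :: real assumes a: "a > 0" and b: "b > 0"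
  shows "sfun ((a + 2*b) / (a^2/b)) = (b^2/a) / (b + 2*a)"
    and "cfun ((a + 2*b) / (a^2/b)) - 1 = (b + 2*a) / (a^2/b)"
proof -
  define t where "t = b / a"
  have t: "t > 0" using a b t_def by simp
  have v: "(a + 2*b) / (a^2/b) = t * (1 + 2*t)" unfolding t_def using a b
    by (simp add: field_simps power2_eq_square)
  have vp: "t * (1 + 2*t) > 0" using t by simp
  have tv: "tau (t * (1 + 2*t)) = t" using tau_of[OF t] .
  have "sfun (t * (1 + 2*t)) = t^2/(t+2)" using sfun_tau[OF vp] tv by simp
  also have "\<dots> = (b^2/a) / (b + 2*a)" unfolding t_def using a b
    by (simp add: field_simps power2_eq_square)
  finally show "sfun ((a + 2*b) / (a^2/b)) = (b^2/a) / (b + 2*a)" unfolding v .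
  have "cfun (t * (1 + 2*t)) - 1 = (t+1)^2 - 1" using cfun_tau[of "t * (1 + 2*t)"] tv by simp
  also have "\<dots> = (b + 2*a) / (a^2/b)" unfolding t_def using a b
    by (simp add: field_simps power2_eq_square)
  finally show "cfun ((a + 2*b) / (a^2/b)) - 1 = (b + 2*a) / (a^2/b)" unfolding v .
qed

lemma ab_unique:
  fixes a b a' b' :: real
  assumes "a > 0" "b > 0" "a' > 0" "b' > 0" "a^2/b = a'^2/b'" "a + 2*b = a' + 2*b'"
  shows "a = a' \<and> b = b'"
proof -
  define P where "P = a^2/b"
  have Ppos: "P > 0" using assms P_def by simp
  have e1: "P * b = a^2" unfolding P_def using assms(2) by simp
  have "P = a'^2/b'" using assms(5) P_def by simp
  then have e2: "P * b' = a'^2" using assms(4) by simp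
  have bb: "b = a^2/P" using e1 Ppos by (simp add: field_simps)
  have bb': "b' = a'^2/P" using e2 Ppos by (simp add: field_simps)
  have mono: "u + 2*(u^2/P) < v + 2*(v^2/P)" if "0 < u" "u < v" for u v
  proof -
    have "u^2 < v^2" using that by (simp add: power_strict_mono)
    then have "u^2/P < v^2/P" using Ppos by (simp add: divide_strict_right_mono)
    then show ?thesis using that by simp
  qed
  have "a = a'"
  proof (rule ccontr)
    assume "a \<noteq> a'"
    then consider "a < a'" | "a' < a" by linarith
    then show False
    proof cases
      case 1 then show False using mono[OF assms(1) 1] assms(6) bb bb' by simp
    next
      case 2 then show False using mono[OF assms(3) 2] assms(6) bb bb' by simp
    qed
  qed
  then show ?thesis using bb bb' by simp
qed

lemma int_const:
  fixes D :: "int \<Rightarrow> real"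
  assumes "\<And>k. D k = D (k-1)"
  shows "D k = D 0"
proof (induction k rule: int_induct[where k=0])
  case base then show ?case by simp
next
  case (step1 i) then show ?case using assms[of "i+1"] by simp
next
  case (step2 i) then show ?case using assms[of i] by simp
qed

lemma std_eq:
  assumes x: "x > 0" and S: "ABMN_standard a b m n" and CR: "central_ratio m n = x"
  shows "a = Ac x \<and> b = Bc x \<and> m = Mc x \<and> n = Nc x"
proof -
  have ab: "ABMN a b m n" and apos: "\<And>i. a i > 0" and bpos: "\<And>i. b i > 0"
    and m0: "(m \<longlongrightarrow> 0) at_bot" and n0: "(n \<longlongrightarrow> 0) at_top" and m1: "(m \<longlongrightarrow> 1) at_top"
    using S unfolding ABMN_standard_def ABMN_positive_def by auto
  have loc: "m i - m (i-1) = (a i)^2 / b i \<and> m (i+1) - m i = b i + 2 * a i \<and>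
             n (i-1) - n i = a i + 2 * b i \<and> n i - n (i+1) = (b i)^2 / a i" for i
  proof -
    have "(a i + b i)*(m i + a i) = a i * m (i+1) + b i * m (i-1) \<and>
        (a i + b i)*(n i + b i) = a i * n (i+1) + b i * n (i-1) \<and>
        (a i + b i)^2 = b i * (m (i+1) - m (i-1)) \<and>
        (a i + b i)^2 = a i * (n (i-1) - n (i+1))" using ab unfolding ABMN_def by blast
    then show ?thesis
      using abmn_local[OF apos bpos, where mc="m i" and mr="m (i+1)" and ml="m (i-1)"
          and nc="n i" and nr="n (i+1)" and nl="n (i-1)"] by blast
  qed
  define p where "p i = m i - m (i-1)" for i
  define q where "q i = n (i-1) - n i" for i
  have p1: "p i = (a i)^2 / b i" for i using loc[of i] p_def by simp
  have p2: "p (i+1) = b i + 2 * a i" for i using loc[of i] p_def by simp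
  have q1: "q i = a i + 2 * b i" for i using loc[of i] q_def by simp
  have q2: "q (i+1) = (b i)^2 / a i" for i using loc[of i] q_def by simp
  have ppos: "p i > 0" for i using p1[of i] apos[of i] bpos[of i] by simp
  define r where "r i = q i / p i" for i
  have rpos: "r i > 0" for i unfolding r_def using q1 ppos apos bpos
    by (metis add_pos_pos divide_pos_pos mult_pos_pos zero_less_numeral)
  have rstep: "r (i+1) = sfun (r i)" for i
    unfolding r_def using ratio_step(1)[OF apos bpos, of i] p1 p2 q1 q2 by simp
  have pstep: "p (i+1) = (cfun (r i) - 1) * p i" for i
    unfolding r_def using ratio_step(2)[OF apos bpos, of i] p1 p2 q1 ppos[of i]
    by (metis nonzero_mult_div_cancel_right order_less_irrefl times_divide_eq_left)
  have r0: "r 0 = x" using CR unfolding central_ratio_def r_def p_def q_def by simp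
  have rs: "r i = siter i x" for i
  proof (induction i rule: int_induct[where k=0])
    case base then show ?case using r0 by simp
  next
    case (step1 i) then show ?case using rstep[of i] siter_succ[OF x, of i] by simp
  next
    case (step2 i)
    have "r i = sfun (r (i-1))" using rstep[of "i-1"] by simp
    then have "r (i-1) = sneg1 (r i)" using sneg1_s[OF rpos[of "i-1"]] by simp
    then show ?case using step2 siter_pred[OF x, of i] by simp
  qed
  define K where "K = p 0 * Zfun x"
  have pK: "p i * Zfun (siter i x) = K" for i
  proof (induction i rule: int_induct[where k=0])
    case base then show ?case unfolding K_def by simp
  next
    case (step1 i)
    have si: "siter i x > 0" using siter_pos[OF x] by simp
    have "p (i+1) * Zfun (siter (i+1) x) = p i * ((cfun (siter i x) - 1) * Zfun (sfun (siter i x)))"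
      using pstep[of i] rs[of i] siter_succ[OF x, of i] by simp
    also have "\<dots> = p i * Zfun (siter i x)" using Z_shift[OF si] by simp
    finally show ?case using step1 by simp
  next
    case (step2 i)
    have si: "siter (i-1) x > 0" using siter_pos[OF x] by simp
    have "p (i-1) * Zfun (siter (i-1) x) = p (i-1) * ((cfun (siter (i-1) x) - 1) * Zfun (sfun (siter (i-1) x)))"
      using Z_shift[OF si] by simp
    also have "\<dots> = p i * Zfun (siter i x)"
      using pstep[of "i-1"] rs[of "i-1"] siter_succ[OF x, of "i-1"] by simp
    finally show ?case using step2 by simp
  qed
  have pf: "p i = K * fZ x i" for i
    using pK[of i] Z_pos[OF siter_pos[OF x, of i]] unfolding fZ_def by (simp add: field_simps)
  have Dc: "m k - K * Mc x k = m 0 - K * Mc x 0" for k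
  proof (rule int_const[where D="\<lambda>k. m k - K * Mc x k"])
    fix k
    show "m k - K * Mc x k = m (k-1) - K * Mc x (k-1)"
      using pf[of k] Mc_step[OF x, of k] unfolding p_def by (simp add: algebra_simps)
  qed
  have T: "((\<lambda>k. m k - K * Mc x k) \<longlongrightarrow> 0 - K * 0) at_bot"
    by (intro tendsto_diff tendsto_mult tendsto_const m0 Mc_bot[OF x])
  have eqf: "(\<lambda>k. m k - K * Mc x k) = (\<lambda>k::int. m 0 - K * Mc x 0)" using Dc by (intro ext)
  have "((\<lambda>k::int. m 0 - K * Mc x 0) \<longlongrightarrow> 0) at_bot" using T unfolding eqf by simp
  then have D0: "m 0 - K * Mc x 0 = 0" by (simp add: tendsto_const_iff)
  then have mK: "m k = K * Mc x k" for k using Dc[of k] by simp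
  have "((\<lambda>k. K * Mc x k) \<longlongrightarrow> K * 1) at_top"
    by (intro tendsto_mult tendsto_const Mc_top[OF x])
  moreover have "m = (\<lambda>k. K * Mc x k)" using mK by (intro ext)
  then have "((\<lambda>k. K * Mc x k) \<longlongrightarrow> 1) at_top" using m1 by simp
  ultimately have K1: "K = 1" using tendsto_unique[OF trivial_limit_at_top_linorder] by fastforce
  have mM: "m = Mc x" using mK K1 by auto
  have qg: "q i = gZ x i" for i
    using pf[of i] K1 rs[of i] unfolding r_def gZ_def fZ_def using ppos[of i] by (simp add: field_simps)
  have Ec: "n k - Nc x k = n 0 - Nc x 0" for k
  proof (rule int_const[where D="\<lambda>k. n k - Nc x k"])
    fix k
    show "n k - Nc x k = n (k-1) - Nc x (k-1)"
      using qg[of k] Nc_step[OF x, of k] unfolding q_def by (simp add: algebra_simps)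
  qed
  have T2: "((\<lambda>k. n k - Nc x k) \<longlongrightarrow> 0 - 0) at_top"
    by (intro tendsto_diff n0 Nc_top[OF x])
  have eqf2: "(\<lambda>k. n k - Nc x k) = (\<lambda>k::int. n 0 - Nc x 0)" using Ec by (intro ext)
  have "((\<lambda>k::int. n 0 - Nc x 0) \<longlongrightarrow> 0) at_top" using T2 unfolding eqf2 by simp
  then have "n 0 - Nc x 0 = 0" by (simp add: tendsto_const_iff)
  then have nN: "n = Nc x" using Ec by (auto simp: fun_eq_iff)
  have abeq: "a i = Ac x i \<and> b i = Bc x i" for i
  proof (rule ab_unique[OF apos bpos Ac_pos[OF x] Bc_pos[OF x]])
    have c: "Mc x i - Mc x (i-1) = (Ac x i)^2 / Bc x i \<and> Nc x (i-1) - Nc x i = Ac x i + 2 * Bc x i"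
      using cand_local[OF x, of i] by simp
    show "(a i)^2 / b i = (Ac x i)^2 / Bc x i" using p1[of i] c mM unfolding p_def by simp
    show "a i + 2 * b i = Ac x i + 2 * Bc x i" using q1[of i] c nN unfolding q_def by simp
  qed
  show ?thesis using abeq mM nN by (auto simp: fun_eq_iff)
qed

lemma st_eq: assumes x: "x > 0" shows "st x = (Ac x, Bc x, Mc x, Nc x)"
  unfolding st_def
proof (rule the_equality)
  show "case (Ac x, Bc x, Mc x, Nc x) of (a, b, m, n) \<Rightarrow> ABMN_standard a b m n \<and> central_ratio m n = x"
    using cand_standard[OF x] by simp
next
  fix z
  assume "case z of (a, b, m, n) \<Rightarrow> ABMN_standard a b m n \<and> central_ratio m n = x"
  then show "z = (Ac x, Bc x, Mc x, Nc x)"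
    using std_eq[OF x] by (cases z) auto
qed

lemma telesc: assumes x: "x > 0"
  shows "Mc x (j + int n) - Mc x j = (\<Sum>i\<in>{j+1..j + int n}. fZ x i) \<and>
         Nc x j - Nc x (j + int n) = (\<Sum>i\<in>{j+1..j + int n}. gZ x i)"
proof (induction n)
  case 0 then show ?case by simp
next
  case (Suc n)
  have S: "{j+1..j + int (Suc n)} = insert (j + int n + 1) {j+1..j + int n}" by auto
  have N: "j + int n + 1 \<notin> {j+1..j + int n}" by simp
  have "Mc x (j + int n + 1) - Mc x (j + int n) = fZ x (j + int n + 1)"
    using Mc_step[OF x, of "j + int n + 1"] by simp
  moreover have "Nc x (j + int n) - Nc x (j + int n + 1) = gZ x (j + int n + 1)"
    using Nc_step[OF x, of "j + int n + 1"] by simp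
  ultimately show ?case using Suc unfolding S using N
    by (simp add: sum.insert_if add.commute add.left_commute)
qed

lemma telesc2: assumes x: "x > 0" and jk: "j < k"
  shows "Mc x k - Mc x j = (\<Sum>i\<in>{j+1..k}. fZ x i) \<and>
         Nc x j - Nc x k = (\<Sum>i\<in>{j+1..k}. gZ x i)"
proof -
  have "k = j + int (nat (k - j))" using jk by simp
  then show ?thesis using telesc[OF x, of j "nat (k-j)"] by metis
qed

theorem mainTheorem19:
  fixes x :: real
  assumes "x > 0"
  shows "(\<forall>k::int. ast x k = gfun (siter k x) \<and> bst x k = hfun (siter k x))
    \<and> (\<forall>j k :: int. j < k \<longrightarrow>
          mst x k - mst x j = (\<Sum>i\<in>{j+1..k}. 1 / Zfun (siter i x)) \<and>
          nst x j - nst x k = (\<Sum>i\<in>{j+1..k}. siter i x / Zfun (siter i x)))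
    \<and> (\<forall>k::int. mst x k - mst x (k-1) = inverse (Zfun (siter k x)) \<and>
          nst x (k-1) - nst x k = siter k x * inverse (Zfun (siter k x)))
    \<and> (\<forall>j k :: nat. Mpr (j+1) (k+1) x =
          inverse (\<Sum>i\<in>{- int j..int k + 1}. 1 / Zfun (siter i x)) *
          (\<Sum>i\<in>{- int j..int k + 1}. siter i x / Zfun (siter i x)))
    \<and> Mlim x = (\<Sum>\<^sub>\<infinity>i\<in>(UNIV::int set). siter i x / Zfun (siter i x))"
proof -
  have x: "x > 0" using assms .
  have st: "st x = (Ac x, Bc x, Mc x, Nc x)" by (rule st_eq[OF x])
  have A: "ast x = Ac x" and B: "bst x = Bc x" and M: "mst x = Mc x" and N: "nst x = Nc x"
    unfolding ast_def bst_def mst_def nst_def st by simp_all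
  have P1: "\<forall>k::int. ast x k = gfun (siter k x) \<and> bst x k = hfun (siter k x)"
    unfolding A B Ac_def Bc_def by simp
  have P2: "\<forall>j k :: int. j < k \<longrightarrow>
          mst x k - mst x j = (\<Sum>i\<in>{j+1..k}. 1 / Zfun (siter i x)) \<and>
          nst x j - nst x k = (\<Sum>i\<in>{j+1..k}. siter i x / Zfun (siter i x))"
    unfolding M N using telesc2[OF x] unfolding fZ_def gZ_def by blast
  have P3: "\<forall>k::int. mst x k - mst x (k-1) = inverse (Zfun (siter k x)) \<and>
          nst x (k-1) - nst x k = siter k x * inverse (Zfun (siter k x))"
    unfolding M N using Mc_step[OF x] Nc_step[OF x] unfolding fZ_def gZ_def
    by (simp add: divide_inverse)
  have P4: "\<forall>j k :: nat. Mpr (j+1) (k+1) x =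
          inverse (\<Sum>i\<in>{- int j..int k + 1}. 1 / Zfun (siter i x)) *
          (\<Sum>i\<in>{- int j..int k + 1}. siter i x / Zfun (siter i x))"
  proof (intro allI)
    fix j k :: nat
    have lt: "- int (j+1) < int (k+1)" by simp
    have I: "{- int (j+1) + 1..int (k+1)} = {- int j..int k + 1}" by simp
    have T: "Mc x (int (k+1)) - Mc x (- int (j+1)) = (\<Sum>i\<in>{- int j..int k + 1}. 1 / Zfun (siter i x))"
         "Nc x (- int (j+1)) - Nc x (int (k+1)) = (\<Sum>i\<in>{- int j..int k + 1}. siter i x / Zfun (siter i x))"
      using telesc2[OF x lt] unfolding I fZ_def gZ_def by auto
    show "Mpr (j+1) (k+1) x =
          inverse (\<Sum>i\<in>{- int j..int k + 1}. 1 / Zfun (siter i x)) *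
          (\<Sum>i\<in>{- int j..int k + 1}. siter i x / Zfun (siter i x))"
      unfolding Mpr_def M N T[symmetric] by (simp add: divide_inverse mult.commute)
  qed
  have P5: "Mlim x = (\<Sum>\<^sub>\<infinity>i\<in>(UNIV::int set). siter i x / Zfun (siter i x))"
  proof -
    define S where "S = infsum (gZ x) UNIV"
    have e: "Nc x = (\<lambda>k. S - infsum (gZ x) {..k})"
    proof (rule ext)
      fix k show "Nc x k = S - infsum (gZ x) {..k}"
        using split_le_gt[OF gZ_summ[OF x], of k] unfolding S_def Nc_def by simp
    qed
    have "((\<lambda>k. S - infsum (gZ x) {..k}) \<longlongrightarrow> S - 0) at_bot"
      using gZ_summ[OF x] gZ_pos[OF x] by (intro tendsto_diff tendsto_const tail_bot) (auto intro: less_imp_le)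
    then have "(Nc x \<longlongrightarrow> S) at_bot" unfolding e by simp
    then have "Lim at_bot (Nc x) = S" by (intro tendsto_Lim) simp_all
    then show ?thesis unfolding Mlim_def N S_def gZ_def[abs_def] .
  qed
  show ?thesis using P1 P2 P3 P4 P5 by blast
qed

end
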